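(* For all non-negative integers $n$ and $p$, $$\sum_{k=1}^n\binom{2k}{k}^{-1}\binom{2(k+p)}{k+p}\binom{k+p}{k}\left(O_{k+p}-O_k\right)=\frac14\binom{2n}{n}^{-1}\binom{2(n+p+1)}{n+p+1}\binom{n+p+1}{n}\left(O_{n+p+1}-O_n\right)-\frac14\binom{2(p+1)}{p+1}O_{p+1}.$$
   Context: The odd harmonic numbers are $O_n=\sum_{k=1}^n\frac{1}{2k-1}$, $O_0=0$. *)

theory Defs
  imports Complex_Main
begin

definition odd_harmonic :: "nat \<Rightarrow> real" where
  "odd_harmonic n = (\<Sum>k=1..n. 1 / (2 * real k - 1))"

end

theory Submission imports Defs begin
lemma L1n: "(2*Suc q choose Suc q) * Suc q = 2*(2*q+1) * (2*q choose q)"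
proof -
  have a: "(2*Suc q choose Suc q) * Suc q = Suc (Suc (2*q)) * (Suc (2*q) choose q)"
    using Suc_times_binomial_eq[of "Suc (2*q)" q] by (simp del: binomial_Suc_Suc)
  have b: "(Suc (2*q) choose q) * Suc q = Suc (2*q) * (2*q choose q)"
    using binomial_absorb_comp[of "Suc (2*q)" q] Suc_diff_le[of q "2*q"]
    by (simp add: mult.commute del: binomial_Suc_Suc)
  have "(2*Suc q choose Suc q) * Suc q * Suc q = 2*(2*q+1) * (2*q choose q) * Suc q"
  proof -
    have "(2*Suc q choose Suc q) * Suc q * Suc q = Suc (Suc (2*q)) * ((Suc (2*q) choose q) * Suc q)"
      proof -
      have g: "\<And>x y c d::nat. x*c = d*y \<Longrightarrow> x*c*c = d*(y*c)" by simp
      show ?thesis by (rule g[OF a])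
    qed
    also have "\<dots> = Suc (Suc (2*q)) * (Suc (2*q) * (2*q choose q))" using b by simp
    also have "\<dots> = 2*(2*q+1) * (2*q choose q) * Suc q" by (simp del: binomial_Suc_Suc add: algebra_simps)
    finally show ?thesis .
  qed
  thus ?thesis by (metis mult_right_cancel nat.distinct(1))
qed
lemma L1: "real (2*Suc q choose Suc q) * (q+1) = 2*(2*q+1) * real (2*q choose q)"
proof -
  have "real ((2*Suc q choose Suc q) * Suc q) = real (2*(2*q+1) * (2*q choose q))"
    using L1n by (rule arg_cong)
  thus ?thesis by (simp only: of_nat_mult of_nat_Suc of_nat_add of_nat_numeral of_nat_1) (simp add: algebra_simps)
qed
lemma key0:
  fixes A D G I K :: real and a b c :: real
  assumes "a > 0" "b > 0" "G > 0" "c = b+2*a"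
  shows "1/4*A*((b+1)/2*D/a)*(I-K)/G + A*D*(I-(K+1/b))/(4*b*G/(b+1))
     = 1/4*(2*c*A*D/a)*((I + 1/c) - (K+1/b))/(4*b*G/(b+1))"
proof -
  have p: "b+1 > 0" "c > 0" using assms by auto
  define u where "u = A*D*(b+1)/(8*a*b*G)"
  have l: "1/4*A*((b+1)/2*D/a)*(I-K)/G + A*D*(I-(K+1/b))/(4*b*G/(b+1))
       = u * (b*(I-K) + 2*a*(I-K) - 2*a/b)"
    unfolding u_def using assms(1-3) p by (simp add: field_simps)
  have r: "1/4*(2*c*A*D/a)*((I + 1/c) - (K+1/b))/(4*b*G/(b+1))
       = u * (c*(I-K) + 1 - c/b)"
    unfolding u_def using assms(1-3) p by (simp add: field_simps)
  have "c*(I-K) + 1 - c/b = b*(I-K) + 2*a*(I-K) - 2*a/b"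
    using assms by (simp add: field_simps)
  thus ?thesis using l r by simp
qed
lemma L2: "m \<le> q \<Longrightarrow> (Suc q choose m) * (Suc q - m) = Suc q * (q choose m)"
  using binomial_absorb_comp[of "Suc q" m] by (simp add: mult.commute)
lemma L3: "(q - n) * (q choose n) = Suc n * (q choose Suc n)"
  using binomial_absorb_comp[of q n] binomial_absorption[of n q] by simp
lemma OS: "odd_harmonic (Suc k) = odd_harmonic k + 1 / (2*real k + 1)"
  unfolding odd_harmonic_def by (simp add: algebra_simps)

theorem theorem16:
  fixes n p :: nat
  shows "(\<Sum>k=1..n. real ((2*(k+p)) choose (k+p)) * real ((k+p) choose k)
            * (odd_harmonic (k+p) - odd_harmonic k) / real ((2*k) choose k))
       = 1/4 * real ((2*(n+p+1)) choose (n+p+1)) * real ((n+p+1) choose n)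
            * (odd_harmonic (n+p+1) - odd_harmonic n) / real ((2*n) choose n)
         - 1/4 * real ((2*(p+1)) choose (p+1)) * odd_harmonic (p+1)"
proof (induction n)
  case 0
  then show ?case by (simp add: odd_harmonic_def)
next
  case (Suc n)
  define Q where "Q = n+p+1"
  define A where "A = real (2*Q choose Q)"
  define D where "D = real (Q choose Suc n)"
  define E where "E = real (Q choose n)"
  define G where "G = real (2*n choose n)"
  define F where "F = real (2*Suc n choose Suc n)"
  define B where "B = real (2*Suc Q choose Suc Q)"
  define C where "C = real (Suc Q choose Suc n)"
  define I where "I = odd_harmonic Q"
  define K where "K = odd_harmonic n"
  define Z where "Z = real ((2*(p+1)) choose (p+1)) * odd_harmonic (p+1)"
  define a where "a = real p + 1"
  define b where "b = 2 * real n + 1"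
  define c where "c = 2 * real Q + 1"
  have a0: "a > 0" unfolding a_def by simp
  have b0: "b > 0" unfolding b_def by simp
  have G0: "G > 0" unfolding G_def by simp
  have cab: "c = b + 2*a" unfolding a_def b_def c_def Q_def by simp
  have E: "E = (b+1)/2*D/a"
  proof -
    have "real ((Q - n) * (Q choose n)) = real (Suc n * (Q choose Suc n))" using L3 by (rule arg_cong)
    moreover have "Q - n = Suc p" unfolding Q_def by simp
    ultimately have "(real p + 1) * E = (real n + 1) * D" unfolding E_def D_def
      by (simp only: of_nat_mult of_nat_Suc) (simp add: algebra_simps)
    thus ?thesis unfolding a_def b_def by (simp add: field_simps)
  qed
  have F: "F = 4*b*G/(b+1)"
  proof -
    have "F * (real n + 1) = 2*(2*real n+1) * G" unfolding F_def G_def by (rule L1)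
    thus ?thesis unfolding b_def by (simp add: field_simps)
  qed
  have BC: "B*C = 2*c*A*D/a"
  proof -
    have 1: "B * (real Q + 1) = 2*(2*real Q+1) * A" unfolding B_def A_def by (rule L1)
    have "(Suc Q choose Suc n) * (Suc Q - Suc n) = Suc Q * (Q choose Suc n)"
      by (rule L2) (simp add: Q_def)
    hence "real ((Suc Q choose Suc n) * (Suc Q - Suc n)) = real (Suc Q * (Q choose Suc n))"
      by (rule arg_cong)
    moreover have "Suc Q - Suc n = Suc p" unfolding Q_def by simp
    ultimately have 2: "C * (real p + 1) = (real Q + 1) * D" unfolding C_def D_def
      by (simp only: of_nat_mult of_nat_Suc) (simp add: algebra_simps)
    have "B*C*((real Q + 1)*(real p + 1)) = (2*(2*real Q+1) * A) * ((real Q + 1) * D)"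
      using 1 2 by (metis mult.assoc mult.left_commute)
    hence "(B*C*(real p + 1))*(real Q + 1) = (2*(2*real Q+1) * A * D) * (real Q + 1)"
      by (simp add: algebra_simps)
    hence "B*C*(real p + 1) = 2*(2*real Q+1) * A * D"
      by (metis mult_right_cancel of_nat_Suc of_nat_0_less_iff zero_less_Suc less_irrefl add.commute)
    thus ?thesis unfolding a_def c_def by (simp add: field_simps)
  qed
  have J: "odd_harmonic (Suc n) = K + 1/b" unfolding K_def b_def by (rule OS)
  have H: "odd_harmonic (Suc Q) = I + 1/c" unfolding I_def c_def by (rule OS)
  have IH: "(\<Sum>k=1..n. real ((2*(k+p)) choose (k+p)) * real ((k+p) choose k)
            * (odd_harmonic (k+p) - odd_harmonic k) / real ((2*k) choose k))
      = 1/4*A*E*(I-K)/G - 1/4*Z"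
    using Suc.IH unfolding A_def E_def I_def K_def G_def Z_def Q_def by simp
  have T: "real ((2*(Suc n+p)) choose (Suc n+p)) * real ((Suc n+p) choose Suc n)
            * (odd_harmonic (Suc n+p) - odd_harmonic (Suc n)) / real ((2*Suc n) choose Suc n)
     = A*D*(I-(K+1/b))/F"
    unfolding A_def D_def I_def F_def Q_def J[symmetric] by simp
  have R: "1/4 * real ((2*(Suc n+p+1)) choose (Suc n+p+1)) * real ((Suc n+p+1) choose Suc n)
            * (odd_harmonic (Suc n+p+1) - odd_harmonic (Suc n)) / real ((2*Suc n) choose Suc n)
         - 1/4 * real ((2*(p+1)) choose (p+1)) * odd_harmonic (p+1)
     = 1/4*(B*C)*((I + 1/c) - (K+1/b))/F - 1/4*Z"
    unfolding B_def C_def F_def Z_def Q_def H[symmetric] J[symmetric]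
    by (simp add: mult.assoc)
  have "1/4*A*E*(I-K)/G - 1/4*Z + A*D*(I-(K+1/b))/F = 1/4*(B*C)*((I + 1/c) - (K+1/b))/F - 1/4*Z"
    unfolding E F BC using key0[OF a0 b0 G0 cab, of A D I K] by simp
  then show ?case using IH T R by simp
qed
end
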